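(* Let $\mathbb{T}=[0,2\pi)\times[0,2\pi)$ with periodic boundary conditions, let $0\le \alpha<1$ and $\kappa>0$, and consider the surface quasi-geostrophic equation $$\partial_t\theta+\mathbf{u}\cdot\nabla\theta+\kappa(-\Delta)^\alpha\theta=0,\qquad \mathbf{u}=(\partial_y,-\partial_x)(-\Delta)^{-\frac12}\theta,$$ for a scalar function $\theta(x,y,t)$ on $\mathbb{T}\times[0,\infty)$. (i) Let $c_1,\dots,c_8$ be real constants and let $n,m,k$ be integers with $nm\neq 0$, such that $n^2+m^2=k^2$ whenever $(|c_1|+|c_2|+|c_3|+|c_4|)(|c_5|+|c_6|+|c_7|+|c_8|)\neq 0$. Then $$\theta=e^{-\kappa(n^2+m^2)^\alpha t}\big(c_1\sin nx\sin my+c_2\cos nx\sin my+c_3\sin nx\cos my+c_4\cos nx\cos my\big)$$ $$\qquad+e^{-\kappa|k|^{2\alpha}t}\big(c_5\sin kx+c_6\sin ky+c_7\cos kx+c_8\cos ky\big)$$ is an exact solution of the equation on $\mathbb{T}$. (ii) Let $n,m$ be integers with $|n|+|m|\neq 0$, and let $(a_k)_{k\in\mathbb{Z}},(b_k)_{k\in\mathbb{Z}}$ be real constants with $\sum_{k\in\mathbb{Z}}|k|(a_k^2+b_k^2)<\infty$. Then $$\theta=\sum_{k\in\mathbb{Z}}e^{-\kappa(n^2k^2+m^2k^2)^\alpha t}\big(a_k\cos(knx+kmy)+b_k\sin(knx+kmy)\big)$$ solves the equation on $\mathbb{T}$.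
   Context: On the $2\pi$-periodic torus $\mathbb{T}$, the operators $(-\Delta)^\alpha$ and $(-\Delta)^{-\frac12}$ are the Fourier multipliers acting on $e^{i(px+qy)}$ by multiplication by $(p^2+q^2)^\alpha$ and $(p^2+q^2)^{-1/2}$ respectively (the latter on nonzero Fourier modes). Thus $\mathbf{u}=(\partial_y(-\Delta)^{-1/2}\theta,\,-\partial_x(-\Delta)^{-1/2}\theta)$. *)

theory Defs
  imports "HOL-Analysis.Analysis"
begin

text \<open>Fundamental domain of the torus T = [0,2pi) x [0,2pi) (closed square; boundary is null).\<close>
definition Tbox :: "(real \<times> real) set" where
  "Tbox = cbox (0,0) (2*pi, 2*pi)"

text \<open>Power with the convention x^0 = 1 (also for x = 0), so that (-Delta)^0 is the identity.\<close>
definition fpow :: "real \<Rightarrow> real \<Rightarrow> real" where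
  "fpow x a = (if a = 0 then 1 else x powr a)"

definition fcoef :: "(real \<Rightarrow> real \<Rightarrow> real) \<Rightarrow> int \<Rightarrow> int \<Rightarrow> complex" where
  "fcoef f p q = integral Tbox (\<lambda>(x,y). complex_of_real (f x y) *
       exp (- \<i> * complex_of_real (real_of_int p * x + real_of_int q * y))) / complex_of_real (4 * pi^2)"

definition frac_symbol :: "real \<Rightarrow> int \<Rightarrow> int \<Rightarrow> real" where
  "frac_symbol \<alpha> p q = fpow (real_of_int (p^2 + q^2)) \<alpha>"

text \<open>Symbol of (-Delta)^(-1/2) (acting on nonzero modes; zero mode sent to 0).\<close>
definition riesz_symbol :: "int \<Rightarrow> int \<Rightarrow> real" where
  "riesz_symbol p q = (if p = 0 \<and> q = 0 then 0 else 1 / sqrt (real_of_int (p^2 + q^2)))"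

text \<open>Fourier coefficients of u = (d_y (-Delta)^(-1/2) theta, - d_x (-Delta)^(-1/2) theta).\<close>
definition vel1_coef :: "(real \<Rightarrow> real \<Rightarrow> real) \<Rightarrow> int \<Rightarrow> int \<Rightarrow> complex" where
  "vel1_coef f p q = \<i> * of_int q * of_real (riesz_symbol p q) * fcoef f p q"

definition vel2_coef :: "(real \<Rightarrow> real \<Rightarrow> real) \<Rightarrow> int \<Rightarrow> int \<Rightarrow> complex" where
  "vel2_coef f p q = - \<i> * of_int p * of_real (riesz_symbol p q) * fcoef f p q"

text \<open>Summand of the (p,q) Fourier coefficient of u . grad theta (convolution over j + l = (p,q)).\<close>
definition transport_term :: "(real \<Rightarrow> real \<Rightarrow> real) \<Rightarrow> int \<Rightarrow> int \<Rightarrow> int \<times> int \<Rightarrow> complex" where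
  "transport_term f p q j =
     (let l1 = p - fst j; l2 = q - snd j in
       vel1_coef f (fst j) (snd j) * (\<i> * of_int l1 * fcoef f l1 l2)
     + vel2_coef f (fst j) (snd j) * (\<i> * of_int l2 * fcoef f l1 l2))"

definition transport_coef :: "(real \<Rightarrow> real \<Rightarrow> real) \<Rightarrow> int \<Rightarrow> int \<Rightarrow> complex" where
  "transport_coef f p q = infsum (transport_term f p q) UNIV"

text \<open>theta x y t is a (Fourier-weak) solution of
  d_t theta + u . grad theta + kappa (-Delta)^alpha theta = 0 on T x [0,oo):
  theta(.,.,t) is in L^2(T) for every t >= 0, the convolution defining the Fourier
  coefficients of u . grad theta converges absolutely, and every Fourier mode satisfies
  the equation (tested against e^{-i(px+qy)}) with a classical time derivative.\<close>
definition sqg_solution :: "real \<Rightarrow> real \<Rightarrow> (real \<Rightarrow> real \<Rightarrow> real \<Rightarrow> real) \<Rightarrow> bool" where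
  "sqg_solution \<kappa> \<alpha> \<theta> \<longleftrightarrow>
     (\<forall>t\<ge>0. (\<lambda>(x,y). \<theta> x y t) measurable_on Tbox
           \<and> (\<lambda>(x,y). (\<theta> x y t)^2) integrable_on Tbox
           \<and> (\<forall>p q. transport_term (\<lambda>x y. \<theta> x y t) p q summable_on UNIV)
           \<and> (\<forall>p q. ((\<lambda>s. fcoef (\<lambda>x y. \<theta> x y s) p q) has_vector_derivative
                 (- transport_coef (\<lambda>x y. \<theta> x y t) p q
                  - of_real (\<kappa> * frac_symbol \<alpha> p q) * fcoef (\<lambda>x y. \<theta> x y t) p q))
                 (at t within {0..})))"

end

theory Submission
  imports Defs
begin


definition E :: "int \<times> int \<Rightarrow> real \<Rightarrow> real \<Rightarrow> complex" where
  "E j x y = exp (\<i> * complex_of_real (real_of_int (fst j) * x + real_of_int (snd j) * y))"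

lemma int_exp_1d:
  "((\<lambda>x. exp (\<i> * complex_of_real (real_of_int a * x))) has_integral (if a = 0 then complex_of_real (2*pi) else 0)) {0..2*pi}"
proof (cases "a = 0")
  case True
  then show ?thesis using has_integral_const_real[of "1::complex" 0 "2*pi"] by (simp add: scaleR_conv_of_real)
next
  case False
  define F where "F x = exp (\<i> * complex_of_real (real_of_int a * x)) / (\<i> * of_int a)" for x
  define G where "G z = exp (\<i> * (of_int a * z)) / (\<i> * of_int a)" for z :: complex
  have FG: "F x = G (of_real x)" for x unfolding F_def G_def by simp
  have "(G has_field_derivative exp (\<i> * (of_int a * of_real x))) (at (of_real x))" for x
    unfolding G_def using False
    by (auto intro!: derivative_eq_intros simp: algebra_simps)
  then have d: "(F has_vector_derivative exp (\<i> * complex_of_real (real_of_int a * x))) (at x within {0..2*pi})" for x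
    unfolding FG[abs_def] by (auto intro!: has_vector_derivative_real_field)
  have "((\<lambda>x. exp (\<i> * complex_of_real (real_of_int a * x))) has_integral (F (2*pi) - F 0)) {0..2*pi}"
    using d by (intro fundamental_theorem_of_calculus) auto
  moreover have "F (2*pi) = F 0"
  proof -
    have "exp (\<i> * complex_of_real (real_of_int a * (2*pi))) = 1"
      using exp_integer_2pi[of "of_int a"] by (simp add: mult_ac)
    then show ?thesis unfolding F_def by simp
  qed
  ultimately show ?thesis using False by simp
qed

lemma int_exp_1d': "integral {0..2*pi} (\<lambda>x. exp (\<i> * complex_of_real (real_of_int a * x))) = (if a = 0 then complex_of_real (2*pi) else 0)"
  using int_exp_1d by (rule integral_unique)

lemma E_split: "E j x y = exp (\<i> * complex_of_real (real_of_int (fst j) * x)) * exp (\<i> * complex_of_real (real_of_int (snd j) * y))"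
  unfolding E_def by (simp add: exp_add[symmetric] algebra_simps)

lemma E_cont: "continuous_on S (\<lambda>z. E j (fst z) (snd z))"
  unfolding E_def by (intro continuous_intros)

lemma E_integrable: "(\<lambda>z. E j (fst z) (snd z)) integrable_on Tbox"
  unfolding Tbox_def by (intro integrable_continuous E_cont)

lemma orth2: "integral Tbox (\<lambda>z. E j (fst z) (snd z)) = (if j = (0,0) then complex_of_real (4*pi^2) else 0)"
proof -
  have "integral Tbox (\<lambda>z. E j (fst z) (snd z)) = integral (cbox 0 (2*pi)) (\<lambda>x. integral (cbox 0 (2*pi)) (\<lambda>y. E j x y))"
    unfolding Tbox_def by (subst integral_prod_continuous) (auto intro: E_cont)
  also have "\<dots> = integral {0..2*pi} (\<lambda>x. exp (\<i> * complex_of_real (real_of_int (fst j) * x)) * integral {0..2*pi} (\<lambda>y. exp (\<i> * complex_of_real (real_of_int (snd j) * y))))"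
    by (simp add: E_split)
  also have "\<dots> = (if fst j = 0 then complex_of_real (2*pi) else 0) * (if snd j = 0 then complex_of_real (2*pi) else 0)"
    by (simp only: integral_mult_left int_exp_1d')
  also have "\<dots> = (if j = (0,0) then complex_of_real (4*pi^2) else 0)"
    by (cases j) (auto simp: power2_eq_square)
  finally show ?thesis .
qed

lemma fcoef_trig:
  assumes fin: "finite I" and rep: "\<And>x y. complex_of_real (g x y) = (\<Sum>i\<in>I. c i * E (\<omega> i) x y)"
  shows "fcoef g p q = (\<Sum>i\<in>{i\<in>I. \<omega> i = (p,q)}. c i)"
proof -
  have eq: "(\<lambda>(x,y). complex_of_real (g x y) * exp (- \<i> * complex_of_real (real_of_int p * x + real_of_int q * y)))
      = (\<lambda>z. \<Sum>i\<in>I. c i * E (fst (\<omega> i) - p, snd (\<omega> i) - q) (fst z) (snd z))"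
  proof (rule ext, clarify)
    fix x y
    show "complex_of_real (g x y) * exp (- \<i> * complex_of_real (real_of_int p * x + real_of_int q * y)) =
         (\<Sum>i\<in>I. c i * E (fst (\<omega> i) - p, snd (\<omega> i) - q) (fst (x,y)) (snd (x,y)))"
      unfolding rep sum_distrib_right
    proof (rule sum.cong[OF refl])
      fix i assume "i \<in> I"
      have "E (\<omega> i) x y * exp (- \<i> * complex_of_real (real_of_int p * x + real_of_int q * y)) = E (fst (\<omega> i) - p, snd (\<omega> i) - q) x y"
        unfolding E_def by (simp add: exp_add[symmetric] algebra_simps)
      then show "c i * E (\<omega> i) x y * exp (- \<i> * complex_of_real (real_of_int p * x + real_of_int q * y)) =
          c i * E (fst (\<omega> i) - p, snd (\<omega> i) - q) (fst (x, y)) (snd (x, y))"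
        by (simp add: mult.assoc)
    qed
  qed
  have "fcoef g p q = (\<Sum>i\<in>I. c i * integral Tbox (\<lambda>z. E (fst (\<omega> i) - p, snd (\<omega> i) - q) (fst z) (snd z))) / complex_of_real (4 * pi^2)"
    unfolding fcoef_def eq
    by (subst integral_sum[OF fin]) (auto intro: integrable_on_mult_right E_integrable)
  also have "\<dots> = (\<Sum>i\<in>I. if \<omega> i = (p,q) then c i else 0)"
    unfolding orth2 sum_divide_distrib
    by (intro sum.cong refl) (auto simp: prod_eq_iff)
  also have "\<dots> = (\<Sum>i\<in>{i\<in>I. \<omega> i = (p,q)}. c i)"
    using fin by (simp add: sum.inter_filter)
  finally show ?thesis .
qed



lemma transport_term_eq:
  "transport_term f p q j = - complex_of_real (riesz_symbol (fst j) (snd j)) * fcoef f (fst j) (snd j)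
      * fcoef f (p - fst j) (q - snd j) * of_int (snd j * (p - fst j) - fst j * (q - snd j))"
  unfolding transport_term_def vel1_coef_def vel2_coef_def Let_def
  by (simp add: algebra_simps)

lemma transport_collinear:
  assumes "\<And>j l. fcoef f (fst j) (snd j) \<noteq> 0 \<Longrightarrow> fcoef f (fst l) (snd l) \<noteq> 0 \<Longrightarrow> snd j * fst l = fst j * snd l"
  shows "transport_term f p q summable_on UNIV \<and> transport_coef f p q = 0"
proof -
  have "transport_term f p q j = 0" for j
  proof (cases "fcoef f (fst j) (snd j) \<noteq> 0 \<and> fcoef f (p - fst j) (q - snd j) \<noteq> 0")
    case True
    then have "snd j * (p - fst j) = fst j * (q - snd j)"
      using assms[of j "(p - fst j, q - snd j)"] by simp
    then show ?thesis unfolding transport_term_eq by simp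
  next
    case False
    then show ?thesis unfolding transport_term_eq by auto
  qed
  then have "transport_term f p q = (\<lambda>_. 0)" by auto
  then show ?thesis unfolding transport_coef_def by simp
qed

lemma transport_isotropic:
  assumes fin: "finite {j. fcoef f (fst j) (snd j) \<noteq> 0}"
    and iso: "\<And>j l. fcoef f (fst j) (snd j) \<noteq> 0 \<Longrightarrow> fcoef f (fst l) (snd l) \<noteq> 0 \<Longrightarrow> j \<noteq> (0,0) \<Longrightarrow> l \<noteq> (0,0)
       \<Longrightarrow> (fst j)^2 + (snd j)^2 = (fst l)^2 + (snd l)^2"
  shows "transport_term f p q summable_on UNIV \<and> transport_coef f p q = 0"
proof
  let ?T = "transport_term f p q"
  let ?S = "{j. fcoef f (fst j) (snd j) \<noteq> 0}"
  have "?T summable_on ?S" using fin by simp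
  moreover have "?T summable_on ?S \<longleftrightarrow> ?T summable_on UNIV"
    by (rule summable_on_cong_neutral) (auto simp: transport_term_eq)
  ultimately show "?T summable_on UNIV" by simp
  define \<sigma> where "\<sigma> j = (p - fst j, q - snd j)" for j :: "int \<times> int"
  have bij: "bij_betw \<sigma> UNIV UNIV"
    by (rule bij_betwI[where g = \<sigma>]) (auto simp: \<sigma>_def)
  have anti: "?T (\<sigma> j) = - ?T j" for j
  proof (cases "fcoef f (fst j) (snd j) \<noteq> 0 \<and> fcoef f (p - fst j) (q - snd j) \<noteq> 0
          \<and> snd j * (p - fst j) - fst j * (q - snd j) \<noteq> 0")
    case True
    then have nz: "j \<noteq> (0,0)" "(p - fst j, q - snd j) \<noteq> (0,0)" by auto
    have "(fst j)^2 + (snd j)^2 = (p - fst j)^2 + (q - snd j)^2"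
      using iso[of j "(p - fst j, q - snd j)"] True nz by auto
    then have "riesz_symbol (fst j) (snd j) = riesz_symbol (p - fst j) (q - snd j)"
      using nz unfolding riesz_symbol_def by (auto simp: prod_eq_iff)
    then show ?thesis unfolding transport_term_eq \<sigma>_def by (simp add: algebra_simps)
  next
    case False
    have cr: "snd j * (p - fst j) - fst j * (q - snd j) = - (snd (\<sigma> j) * (p - fst (\<sigma> j)) - fst (\<sigma> j) * (q - snd (\<sigma> j)))"
      by (simp add: \<sigma>_def algebra_simps)
    have l: "fst (\<sigma> j) = p - fst j" "snd (\<sigma> j) = q - snd j" "p - fst (\<sigma> j) = fst j" "q - snd (\<sigma> j) = snd j"
      by (auto simp: \<sigma>_def)
    from False consider "fcoef f (fst j) (snd j) = 0" | "fcoef f (p - fst j) (q - snd j) = 0"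
        | "snd j * (p - fst j) - fst j * (q - snd j) = 0" by blast
    then show ?thesis
    proof cases
      case 3
      then have "snd (\<sigma> j) * (p - fst (\<sigma> j)) - fst (\<sigma> j) * (q - snd (\<sigma> j)) = 0" using cr by simp
      then show ?thesis using 3 unfolding transport_term_eq by simp
    qed (simp_all add: transport_term_eq l)
  qed
  have "infsum ?T UNIV = infsum (\<lambda>j. ?T (\<sigma> j)) UNIV"
    using infsum_reindex_bij_betw[OF bij, of ?T] by simp
  also have "\<dots> = - infsum ?T UNIV" unfolding anti by (rule infsum_uminus)
  finally show "transport_coef f p q = 0" unfolding transport_coef_def by simp
qed



lemma sol_from_coefs:
  assumes meas: "\<And>t. t \<ge> 0 \<Longrightarrow> (\<lambda>(x,y). \<theta> x y t) measurable_on Tbox \<and> (\<lambda>(x,y). (\<theta> x y t)^2) integrable_on Tbox"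
    and coef: "\<And>t p q. t \<ge> 0 \<Longrightarrow> fcoef (\<lambda>x y. \<theta> x y t) p q = complex_of_real (exp (- \<kappa> * frac_symbol \<alpha> p q * t)) * C p q"
    and tr: "\<And>t p q. t \<ge> 0 \<Longrightarrow> transport_term (\<lambda>x y. \<theta> x y t) p q summable_on UNIV \<and> transport_coef (\<lambda>x y. \<theta> x y t) p q = 0"
  shows "sqg_solution \<kappa> \<alpha> \<theta>"
  unfolding sqg_solution_def
proof (intro allI impI conjI)
  fix t :: real assume t: "t \<ge> 0"
  show "(\<lambda>(x,y). \<theta> x y t) measurable_on Tbox" "(\<lambda>(x,y). (\<theta> x y t)^2) integrable_on Tbox"
    using meas[OF t] by auto
  fix p q
  show "transport_term (\<lambda>x y. \<theta> x y t) p q summable_on UNIV" using tr[OF t] by auto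
  fix p q
  have d: "((\<lambda>s. complex_of_real (exp (- \<kappa> * frac_symbol \<alpha> p q * s)) * C p q) has_vector_derivative
      (complex_of_real (exp (- \<kappa> * frac_symbol \<alpha> p q * t) * (- \<kappa> * frac_symbol \<alpha> p q)) * C p q)) (at t within {0..})"
    by (auto intro!: derivative_eq_intros)
  have "((\<lambda>s. fcoef (\<lambda>x y. \<theta> x y s) p q) has_vector_derivative
      (complex_of_real (exp (- \<kappa> * frac_symbol \<alpha> p q * t) * (- \<kappa> * frac_symbol \<alpha> p q)) * C p q)) (at t within {0..})"
    by (rule has_vector_derivative_transform_within[OF d zero_less_one]) (use t in \<open>auto simp: coef\<close>)
  moreover have "complex_of_real (exp (- \<kappa> * frac_symbol \<alpha> p q * t) * (- \<kappa> * frac_symbol \<alpha> p q)) * C p q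
     = - transport_coef (\<lambda>x y. \<theta> x y t) p q - complex_of_real (\<kappa> * frac_symbol \<alpha> p q) * fcoef (\<lambda>x y. \<theta> x y t) p q"
    using tr[OF t, of p q] coef[OF t, of p q] by simp
  ultimately show "((\<lambda>s. fcoef (\<lambda>x y. \<theta> x y s) p q) has_vector_derivative
      (- transport_coef (\<lambda>x y. \<theta> x y t) p q - complex_of_real (\<kappa> * frac_symbol \<alpha> p q) * fcoef (\<lambda>x y. \<theta> x y t) p q)) (at t within {0..})"
    by simp
qed



lemma Tbox_lebesgue: "Tbox \<in> sets lebesgue"
  unfolding Tbox_def by simp

lemma cont_meas:
  fixes f :: "real \<times> real \<Rightarrow> real"
  assumes "continuous_on Tbox f"
  shows "f measurable_on Tbox \<and> (\<lambda>z. (f z)^2) integrable_on Tbox"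
proof
  show "f measurable_on Tbox"
    using measurable_on_iff_borel_measurable[OF Tbox_lebesgue] continuous_imp_measurable_on_sets_lebesgue[OF assms Tbox_lebesgue]
    by blast
  have "continuous_on Tbox (\<lambda>z. (f z)^2)" by (intro continuous_intros assms)
  then show "(\<lambda>z. (f z)^2) integrable_on Tbox" unfolding Tbox_def by (rule integrable_continuous)
qed

lemma trig_solution:
  assumes fin: "finite I"
    and rep: "\<And>x y s. complex_of_real (\<theta> x y s) =
       (\<Sum>i\<in>I. complex_of_real (exp (- \<kappa> * frac_symbol \<alpha> (fst (\<omega> i)) (snd (\<omega> i)) * s)) * c i * E (\<omega> i) x y)"
    and iso: "\<And>i i'. i \<in> I \<Longrightarrow> i' \<in> I \<Longrightarrow> c i \<noteq> 0 \<Longrightarrow> c i' \<noteq> 0 \<Longrightarrow> \<omega> i \<noteq> (0,0) \<Longrightarrow> \<omega> i' \<noteq> (0,0) \<Longrightarrow>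
        (fst (\<omega> i))^2 + (snd (\<omega> i))^2 = (fst (\<omega> i'))^2 + (snd (\<omega> i'))^2"
  shows "sqg_solution \<kappa> \<alpha> \<theta>"
proof (rule sol_from_coefs[where C = "\<lambda>p q. \<Sum>i\<in>{i\<in>I. \<omega> i = (p,q)}. c i"])
  fix t :: real
  have th: "(\<lambda>(x,y). \<theta> x y t) = (\<lambda>z. Re (\<Sum>i\<in>I. complex_of_real (exp (- \<kappa> * frac_symbol \<alpha> (fst (\<omega> i)) (snd (\<omega> i)) * t)) * c i * E (\<omega> i) (fst z) (snd z)))"
  proof (rule ext, clarify)
    fix x y
    show "\<theta> x y t = Re (\<Sum>i\<in>I. complex_of_real (exp (- \<kappa> * frac_symbol \<alpha> (fst (\<omega> i)) (snd (\<omega> i)) * t)) * c i * E (\<omega> i) (fst (x,y)) (snd (x,y)))"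
      using arg_cong[where f=Re, OF rep[of x y t]] by (simp only: Re_complex_of_real fst_conv snd_conv)
  qed
  have "continuous_on Tbox (\<lambda>(x,y). \<theta> x y t)" unfolding th E_def by (intro continuous_intros)
  from cont_meas[OF this] show "(\<lambda>(x,y). \<theta> x y t) measurable_on Tbox \<and> (\<lambda>(x,y). (\<theta> x y t)^2) integrable_on Tbox"
    by (simp add: case_prod_beta')
  have fc: "fcoef (\<lambda>x y. \<theta> x y t) p q = complex_of_real (exp (- \<kappa> * frac_symbol \<alpha> p q * t)) * (\<Sum>i\<in>{i\<in>I. \<omega> i = (p,q)}. c i)" for p q
  proof -
    have "fcoef (\<lambda>x y. \<theta> x y t) p q = (\<Sum>i\<in>{i\<in>I. \<omega> i = (p,q)}. complex_of_real (exp (- \<kappa> * frac_symbol \<alpha> (fst (\<omega> i)) (snd (\<omega> i)) * t)) * c i)"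
      by (rule fcoef_trig[OF fin]) (simp add: rep)
    also have "\<dots> = (\<Sum>i\<in>{i\<in>I. \<omega> i = (p,q)}. complex_of_real (exp (- \<kappa> * frac_symbol \<alpha> p q * t)) * c i)"
      by (rule sum.cong) auto
    finally show ?thesis by (simp add: sum_distrib_left)
  qed
  then show "\<And>p q. t \<ge> 0 \<Longrightarrow> fcoef (\<lambda>x y. \<theta> x y t) p q = complex_of_real (exp (- \<kappa> * frac_symbol \<alpha> p q * t)) * (\<Sum>i\<in>{i\<in>I. \<omega> i = (p,q)}. c i)"
    by simp
  have nz: "\<exists>i\<in>I. \<omega> i = j \<and> c i \<noteq> 0" if "fcoef (\<lambda>x y. \<theta> x y t) (fst j) (snd j) \<noteq> 0" for j
  proof -
    from that have "(\<Sum>i\<in>{i\<in>I. \<omega> i = (fst j, snd j)}. c i) \<noteq> 0" unfolding fc by auto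
    then have "\<not> (\<forall>i\<in>{i\<in>I. \<omega> i = (fst j, snd j)}. c i = 0)" by (meson sum.neutral)
    then obtain i where "i \<in> {i\<in>I. \<omega> i = (fst j, snd j)}" "c i \<noteq> 0" by blast
    then show ?thesis by auto
  qed
  show "transport_term (\<lambda>x y. \<theta> x y t) p q summable_on UNIV \<and> transport_coef (\<lambda>x y. \<theta> x y t) p q = 0" for p q
  proof (rule transport_isotropic)
    have "{j. fcoef (\<lambda>x y. \<theta> x y t) (fst j) (snd j) \<noteq> 0} \<subseteq> \<omega> ` I" using nz by blast
    then show "finite {j. fcoef (\<lambda>x y. \<theta> x y t) (fst j) (snd j) \<noteq> 0}" using fin finite_subset by blast
    show "(fst j)^2 + (snd j)^2 = (fst l)^2 + (snd l)^2"
      if A: "fcoef (\<lambda>x y. \<theta> x y t) (fst j) (snd j) \<noteq> 0" "fcoef (\<lambda>x y. \<theta> x y t) (fst l) (snd l) \<noteq> 0"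
        "j \<noteq> (0,0)" "l \<noteq> (0,0)" for j l
    proof -
      obtain i where i: "i \<in> I" "\<omega> i = j" "c i \<noteq> 0" using nz[OF A(1)] by blast
      obtain i' where i': "i' \<in> I" "\<omega> i' = l" "c i' \<noteq> 0" using nz[OF A(2)] by blast
      show ?thesis using iso[OF i(1) i'(1) i(3) i'(3)] i(2) i'(2) A(3,4) by simp
    qed
  qed
qed



lemma E_explicit: "E j x y = Complex (cos (real_of_int (fst j) * x + real_of_int (snd j) * y)) (sin (real_of_int (fst j) * x + real_of_int (snd j) * y))"
  unfolding E_def by (simp add: exp_Euler complex_eq_iff cos_of_real sin_of_real flip: of_real_mult of_real_add)

lemma rep1:
  fixes e1 e2 x y :: real and n m k :: int
  shows "complex_of_real (e1 * (c1 * sin (n * x) * sin (m * y) + c2 * cos (n * x) * sin (m * y)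
             + c3 * sin (n * x) * cos (m * y) + c4 * cos (n * x) * cos (m * y))
        + e2 * (c5 * sin (k * x) + c6 * sin (k * y) + c7 * cos (k * x) + c8 * cos (k * y)))
   = complex_of_real e1 * ((- c1 - \<i> * c2 - \<i> * c3 + c4)/4) * E (n, m) x y
   + complex_of_real e1 * ((c1 + \<i> * c2 - \<i> * c3 + c4)/4) * E (n, -m) x y
   + complex_of_real e1 * ((c1 - \<i> * c2 + \<i> * c3 + c4)/4) * E (-n, m) x y
   + complex_of_real e1 * ((- c1 + \<i> * c2 + \<i> * c3 + c4)/4) * E (-n, -m) x y
   + complex_of_real e2 * ((- \<i> * c5 + c7)/2) * E (k, 0) x y
   + complex_of_real e2 * ((\<i> * c5 + c7)/2) * E (-k, 0) x y
   + complex_of_real e2 * ((- \<i> * c6 + c8)/2) * E (0, k) x y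
   + complex_of_real e2 * ((\<i> * c6 + c8)/2) * E (0, -k) x y"
  unfolding E_explicit
  by (simp add: complex_eq_iff cos_add sin_add cos_diff sin_diff algebra_simps diff_divide_distrib add_divide_distrib)



lemma fpow_abs2: "0 \<le> \<alpha> \<Longrightarrow> fpow (real_of_int (k^2)) \<alpha> = fpow (real_of_int \<bar>k\<bar>) (2 * \<alpha>)"
  unfolding fpow_def
  by (simp add: powr_powr[symmetric] powr_numeral)

lemma lt8: "(i::nat) < 8 \<Longrightarrow> i = 0 \<or> i = 1 \<or> i = 2 \<or> i = 3 \<or> i = 4 \<or> i = 5 \<or> i = 6 \<or> i = 7"
  by auto

lemma part1:
  fixes \<kappa> \<alpha> :: real
  assumes "0 \<le> \<alpha>"
  shows "(\<forall>(c1::real) c2 c3 c4 c5 c6 c7 c8 (n::int) (m::int) (k::int).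
       n * m \<noteq> 0 \<longrightarrow>
       ((\<bar>c1\<bar> + \<bar>c2\<bar> + \<bar>c3\<bar> + \<bar>c4\<bar>) * (\<bar>c5\<bar> + \<bar>c6\<bar> + \<bar>c7\<bar> + \<bar>c8\<bar>) \<noteq> 0
          \<longrightarrow> n^2 + m^2 = k^2) \<longrightarrow>
       sqg_solution \<kappa> \<alpha> (\<lambda>x y t.
          exp (- \<kappa> * fpow (real_of_int (n^2 + m^2)) \<alpha> * t) *
            (c1 * sin (n * x) * sin (m * y) + c2 * cos (n * x) * sin (m * y)
             + c3 * sin (n * x) * cos (m * y) + c4 * cos (n * x) * cos (m * y))
        + exp (- \<kappa> * fpow (real_of_int \<bar>k\<bar>) (2 * \<alpha>) * t) *
            (c5 * sin (k * x) + c6 * sin (k * y) + c7 * cos (k * x) + c8 * cos (k * y))))"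
proof (intro allI impI)
  fix c1 c2 c3 c4 c5 c6 c7 c8 :: real and n m k :: int
  assume nm: "n * m \<noteq> 0"
    and H: "(\<bar>c1\<bar> + \<bar>c2\<bar> + \<bar>c3\<bar> + \<bar>c4\<bar>) * (\<bar>c5\<bar> + \<bar>c6\<bar> + \<bar>c7\<bar> + \<bar>c8\<bar>) \<noteq> 0 \<longrightarrow> n^2 + m^2 = k^2"
  define \<omega> where "\<omega> i = [(n,m),(n,-m),(-n,m),(-n,-m),(k,0),(-k,0),(0,k),(0,-k)] ! i" for i
  define c where "c i = [(- c1 - \<i> * c2 - \<i> * c3 + c4)/4, (c1 + \<i> * c2 - \<i> * c3 + c4)/4,
      (c1 - \<i> * c2 + \<i> * c3 + c4)/4, (- c1 + \<i> * c2 + \<i> * c3 + c4)/4,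
      (- \<i> * c5 + c7)/2, (\<i> * c5 + c7)/2, (- \<i> * c6 + c8)/2, (\<i> * c6 + c8)/2] ! i" for i
  show "sqg_solution \<kappa> \<alpha> (\<lambda>x y t.
          exp (- \<kappa> * fpow (real_of_int (n^2 + m^2)) \<alpha> * t) *
            (c1 * sin (n * x) * sin (m * y) + c2 * cos (n * x) * sin (m * y)
             + c3 * sin (n * x) * cos (m * y) + c4 * cos (n * x) * cos (m * y))
        + exp (- \<kappa> * fpow (real_of_int \<bar>k\<bar>) (2 * \<alpha>) * t) *
            (c5 * sin (k * x) + c6 * sin (k * y) + c7 * cos (k * x) + c8 * cos (k * y)))"
  proof (rule trig_solution[where I = "{..<8}" and \<omega> = \<omega> and c = c])
    show "finite {..<8::nat}" by simp
  next
    fix x y s :: real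
    have fs1: "frac_symbol \<alpha> a b = fpow (real_of_int (n^2 + m^2)) \<alpha>" if "a = n \<or> a = -n" "b = m \<or> b = -m" for a b
      using that unfolding frac_symbol_def by auto
    have fs2: "frac_symbol \<alpha> a b = fpow (real_of_int \<bar>k\<bar>) (2 * \<alpha>)" if "(a = k \<or> a = -k) \<and> b = 0 \<or> a = 0 \<and> (b = k \<or> b = -k)" for a b
      using that fpow_abs2[OF assms, of k] unfolding frac_symbol_def by auto
    show "complex_of_real (exp (- \<kappa> * fpow (real_of_int (n^2 + m^2)) \<alpha> * s) *
            (c1 * sin (n * x) * sin (m * y) + c2 * cos (n * x) * sin (m * y)
             + c3 * sin (n * x) * cos (m * y) + c4 * cos (n * x) * cos (m * y))
        + exp (- \<kappa> * fpow (real_of_int \<bar>k\<bar>) (2 * \<alpha>) * s) *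
            (c5 * sin (k * x) + c6 * sin (k * y) + c7 * cos (k * x) + c8 * cos (k * y))) =
       (\<Sum>i\<in>{..<8}. complex_of_real (exp (- \<kappa> * frac_symbol \<alpha> (fst (\<omega> i)) (snd (\<omega> i)) * s)) * c i * E (\<omega> i) x y)"
      unfolding rep1
      by (simp add: lessThan_nat_numeral \<omega>_def c_def fs1 fs2 algebra_simps)
  next
    fix i i' assume "i \<in> {..<8::nat}" "i' \<in> {..<8::nat}" "c i \<noteq> 0" "c i' \<noteq> 0"
    show "(fst (\<omega> i))^2 + (snd (\<omega> i))^2 = (fst (\<omega> i'))^2 + (snd (\<omega> i'))^2"
    proof -
      have z1: "(\<bar>c1\<bar> + \<bar>c2\<bar> + \<bar>c3\<bar> + \<bar>c4\<bar> = 0) = (c1 = 0 \<and> c2 = 0 \<and> c3 = 0 \<and> c4 = 0)" by linarith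
      have z2: "(\<bar>c5\<bar> + \<bar>c6\<bar> + \<bar>c7\<bar> + \<bar>c8\<bar> = 0) = (c5 = 0 \<and> c6 = 0 \<and> c7 = 0 \<and> c8 = 0)" by linarith
      have A: "(fst (\<omega> j))^2 + (snd (\<omega> j))^2 = n^2 + m^2 \<and> (c j \<noteq> 0 \<longrightarrow> \<bar>c1\<bar> + \<bar>c2\<bar> + \<bar>c3\<bar> + \<bar>c4\<bar> \<noteq> 0)" if "j < 4" for j
        using that lt8[of j] by (auto simp: \<omega>_def c_def z1)
      have B: "(fst (\<omega> j))^2 + (snd (\<omega> j))^2 = k^2 \<and> (c j \<noteq> 0 \<longrightarrow> \<bar>c5\<bar> + \<bar>c6\<bar> + \<bar>c7\<bar> + \<bar>c8\<bar> \<noteq> 0)" if "4 \<le> j" "j < 8" for j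
        using that lt8[of j] by (auto simp: \<omega>_def c_def z2)
      show ?thesis
      proof (cases "i < 4"; cases "i' < 4")
        assume "i < 4" "i' < 4" then show ?thesis using A by simp
      next
        assume "\<not> i < 4" "\<not> i' < 4" then show ?thesis using B \<open>i \<in> {..<8}\<close> \<open>i' \<in> {..<8}\<close> by simp
      next
        assume "i < 4" "\<not> i' < 4"
        then show ?thesis using A[of i] B[of i'] H \<open>i' \<in> {..<8}\<close> \<open>c i \<noteq> 0\<close> \<open>c i' \<noteq> 0\<close> by simp
      next
        assume "\<not> i < 4" "i' < 4"
        then show ?thesis using A[of i'] B[of i] H \<open>i \<in> {..<8}\<close> \<open>c i \<noteq> 0\<close> \<open>c i' \<noteq> 0\<close> by simp
      qed
    qed
  qed
qed



definition ee :: "int \<Rightarrow> int \<Rightarrow> real \<times> real \<Rightarrow> complex" where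
  "ee p q z = exp (- \<i> * complex_of_real (real_of_int p * fst z + real_of_int q * snd z))"

lemma norm_ee: "norm (ee p q z) = 1"
proof -
  have "ee p q z = exp (\<i> * complex_of_real (- (real_of_int p * fst z + real_of_int q * snd z)))"
    unfolding ee_def by (simp add: algebra_simps)
  then show ?thesis by (simp only: norm_exp_i_times)
qed

lemma fcoef_alt: "fcoef f p q = integral Tbox (\<lambda>z. f (fst z) (snd z) *\<^sub>R ee p q z) / complex_of_real (4 * pi^2)"
  unfolding fcoef_def ee_def by (simp add: case_prod_beta' scaleR_conv_of_real)

lemma cont_measurable:
  fixes f :: "real \<times> real \<Rightarrow> 'b::euclidean_space"
  assumes "continuous_on Tbox f"
  shows "f measurable_on Tbox"
  using measurable_on_iff_borel_measurable[OF Tbox_lebesgue] continuous_imp_measurable_on_sets_lebesgue[OF assms Tbox_lebesgue]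
  by blast

lemma ee_measurable: "ee p q measurable_on Tbox"
  by (rule cont_measurable) (unfold ee_def, intro continuous_intros)

lemma int_scaleR_ee:
  assumes u: "u measurable_on Tbox" and g: "g integrable_on Tbox" and b: "\<And>z. z \<in> Tbox \<Longrightarrow> \<bar>u z\<bar> \<le> g z"
  shows "(\<lambda>z. u z *\<^sub>R ee p q z) integrable_on Tbox"
proof (rule measurable_bounded_by_integrable_imp_integrable[OF _ g _ Tbox_lebesgue])
  have "(\<lambda>z. u z *\<^sub>R ee p q z) measurable_on Tbox"
    by (rule measurable_on_scaleR[OF u ee_measurable])
  then show "(\<lambda>z. u z *\<^sub>R ee p q z) \<in> borel_measurable (lebesgue_on Tbox)"
    using measurable_on_iff_borel_measurable[OF Tbox_lebesgue] by blast
  show "norm (u z *\<^sub>R ee p q z) \<le> g z" if "z \<in> Tbox" for z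
    using b[OF that] by (simp add: norm_ee)
qed

lemma content_Tbox: "measure lborel Tbox = 4 * pi^2"
  unfolding Tbox_def by (simp add: content_Pair power2_eq_square)

lemma L2_sq_integrable:
  fixes h :: "real \<times> real \<Rightarrow> real" and s :: "real \<times> real \<Rightarrow> real"
  assumes hm: "h measurable_on Tbox" and sc: "continuous_on Tbox s"
    and di: "(\<lambda>z. (h z - s z)^2) integrable_on Tbox"
  shows "(\<lambda>z. (h z)^2) integrable_on Tbox"
proof (rule measurable_bounded_by_integrable_imp_integrable_real[OF _ _ _ Tbox_lebesgue])
  have "((\<lambda>x. x^2) \<circ> h) measurable_on Tbox"
    by (rule measurable_on_compose_continuous_0[OF hm]) (auto intro: continuous_intros)
  then show "(\<lambda>z. (h z)^2) \<in> borel_measurable (lebesgue_on Tbox)"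
    using measurable_on_iff_borel_measurable[OF Tbox_lebesgue, of "\<lambda>z. (h z)^2"] by (simp add: o_def)
  have "(\<lambda>z. (s z)^2) integrable_on Tbox"
    unfolding Tbox_def by (intro integrable_continuous continuous_intros sc[unfolded Tbox_def])
  then show "(\<lambda>z. 2 * (h z - s z)^2 + 2 * (s z)^2) integrable_on Tbox"
    using di by (intro integrable_add integrable_on_mult_right)
  show "\<bar>(h z)^2\<bar> \<le> 2 * (h z - s z)^2 + 2 * (s z)^2" for z
  proof -
    have "0 \<le> (h z - 2 * s z)^2" by simp
    then show ?thesis by (simp add: power2_eq_square algebra_simps)
  qed
qed

lemma integral_const_Tbox: "integral Tbox (\<lambda>z. c) = 4 * pi^2 * (c::real)"
  using content_Tbox unfolding Tbox_def by simp

lemma integrable_const_Tbox: "(\<lambda>z. c::real) integrable_on Tbox"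
  unfolding Tbox_def by (rule integrable_const)

lemma L2_fcoef:
  fixes h :: "real \<times> real \<Rightarrow> real" and s :: "nat \<Rightarrow> real \<times> real \<Rightarrow> real"
  assumes hm: "h measurable_on Tbox" and sc: "\<And>N. continuous_on Tbox (s N)"
    and di: "\<And>N. (\<lambda>z. (h z - s N z)^2) integrable_on Tbox"
    and lim: "(\<lambda>N. integral Tbox (\<lambda>z. (h z - s N z)^2)) \<longlonglongrightarrow> 0"
    and ev: "eventually (\<lambda>N. fcoef (\<lambda>x y. s N (x,y)) p q = L) sequentially"
  shows "fcoef (\<lambda>x y. h (x,y)) p q = L"
proof -
  define A :: real where "A = 4 * pi^2"
  have A: "A > 0" unfolding A_def by simp
  define I where "I N = integral Tbox (\<lambda>z. (h z - s N z)^2)" for N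
  have h2: "(\<lambda>z. (h z)^2) integrable_on Tbox"
    by (rule L2_sq_integrable[OF hm sc di])
  have hint: "(\<lambda>z. h z *\<^sub>R ee p q z) integrable_on Tbox"
  proof (rule int_scaleR_ee[OF hm])
    show "(\<lambda>z. 1/2 + (1/2) * (h z)^2) integrable_on Tbox"
      by (intro integrable_add integrable_const_Tbox integrable_on_mult_right h2)
    show "\<bar>h z\<bar> \<le> 1/2 + (1/2) * (h z)^2" for z
    proof -
      have "0 \<le> (\<bar>h z\<bar> - 1)^2" by simp
      then show ?thesis by (simp add: power2_eq_square algebra_simps)
    qed
  qed
  have sint: "(\<lambda>z. s N z *\<^sub>R ee p q z) integrable_on Tbox" for N
    unfolding Tbox_def ee_def
    by (intro integrable_continuous continuous_intros sc[unfolded Tbox_def])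
  have bound: "norm (fcoef (\<lambda>x y. h (x,y)) p q - fcoef (\<lambda>x y. s N (x,y)) p q) \<le> (\<delta> * A + I N / \<delta>) / (2 * A)"
    if d: "\<delta> > 0" for \<delta> N
  proof -
    have "fcoef (\<lambda>x y. h (x,y)) p q - fcoef (\<lambda>x y. s N (x,y)) p q
        = integral Tbox (\<lambda>z. (h z - s N z) *\<^sub>R ee p q z) / complex_of_real A"
      unfolding fcoef_alt A_def
      by (simp add: integral_diff[OF hint sint] diff_divide_distrib scaleR_diff_left)
    also have "norm \<dots> = norm (integral Tbox (\<lambda>z. (h z - s N z) *\<^sub>R ee p q z)) / A"
      using A by (simp add: norm_divide)
    also have "norm (integral Tbox (\<lambda>z. (h z - s N z) *\<^sub>R ee p q z)) \<le> integral Tbox (\<lambda>z. \<delta>/2 + (1/(2*\<delta>)) * (h z - s N z)^2)"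
    proof (rule integral_norm_bound_integral)
      show "(\<lambda>z. (h z - s N z) *\<^sub>R ee p q z) integrable_on Tbox"
        using integrable_diff[OF hint sint[of N]] by (simp add: scaleR_diff_left)
      show "(\<lambda>z. \<delta>/2 + (1/(2*\<delta>)) * (h z - s N z)^2) integrable_on Tbox"
        by (intro integrable_add integrable_const_Tbox integrable_on_mult_right di)
      show "norm ((h z - s N z) *\<^sub>R ee p q z) \<le> \<delta>/2 + (1/(2*\<delta>)) * (h z - s N z)^2" for z
      proof -
        have "0 \<le> (\<bar>h z - s N z\<bar> - \<delta>)^2" by simp
        then have "2 * \<delta> * \<bar>h z - s N z\<bar> \<le> \<delta>^2 + (h z - s N z)^2"
          by (simp add: power2_eq_square algebra_simps)
        then have "\<bar>h z - s N z\<bar> \<le> \<delta>/2 + (1/(2*\<delta>)) * (h z - s N z)^2"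
          using d by (simp add: field_simps power2_eq_square)
        then show ?thesis by (simp add: norm_ee)
      qed
    qed
    also have "integral Tbox (\<lambda>z. \<delta>/2 + (1/(2*\<delta>)) * (h z - s N z)^2) = A * \<delta> / 2 + I N / (2 * \<delta>)"
      unfolding I_def A_def
      by (subst integral_add) (auto intro: integrable_const_Tbox integrable_on_mult_right integrable_on_divide di simp: integral_const_Tbox)
    finally show ?thesis
      using A d by (simp add: divide_right_mono field_simps)
  qed
  show ?thesis
  proof -
    have "norm (fcoef (\<lambda>x y. h (x,y)) p q - L) \<le> 0 + e" if e: "e > 0" for e
    proof -
      define \<delta> where "\<delta> = e * A / (A + 1)"
      have dpos: "\<delta> > 0" unfolding \<delta>_def using e A by simp
      have "eventually (\<lambda>N. I N < \<delta>^2) sequentially"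
        using order_tendstoD(2)[OF lim[folded I_def], of "\<delta>^2"] dpos by simp
      with ev have "eventually (\<lambda>N. I N < \<delta>^2 \<and> fcoef (\<lambda>x y. s N (x,y)) p q = L) sequentially"
        by (simp add: eventually_conj_iff)
      then obtain N0 where "\<forall>N\<ge>N0. I N < \<delta>^2 \<and> fcoef (\<lambda>x y. s N (x,y)) p q = L"
        unfolding eventually_sequentially by blast
      then obtain N where N: "I N < \<delta>^2" "fcoef (\<lambda>x y. s N (x,y)) p q = L" by blast
      have "norm (fcoef (\<lambda>x y. h (x,y)) p q - L) \<le> (\<delta> * A + I N / \<delta>) / (2 * A)"
        using bound[OF dpos, of N] N(2) by simp
      also have "\<dots> \<le> (\<delta> * A + \<delta>) / (2 * A)"
      proof -
        have "I N / \<delta> \<le> \<delta>" using N(1) dpos by (simp add: field_simps power2_eq_square)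
        then show ?thesis using A by (simp add: divide_right_mono)
      qed
      also have "\<dots> = e / 2"
      proof -
        have ne: "A + 1 \<noteq> 0" using A by simp
        have "\<delta> * A + \<delta> = \<delta> * (A + 1)" by (simp add: algebra_simps)
        also have "\<dots> = e * A" unfolding \<delta>_def using ne by simp
        finally have "\<delta> * A + \<delta> = e * A" .
        then show ?thesis using A by simp
      qed
      also have "\<dots> \<le> 0 + e" using e by simp
      finally show ?thesis .
    qed
    then have "norm (fcoef (\<lambda>x y. h (x,y)) p q - L) \<le> 0" by (rule field_le_epsilon)
    then show ?thesis by simp
  qed
qed



lemma sin_mm: "sin (- u - v) = - sin (u + v)"
proof -
  have "- u - v = - (u + v)" by simp
  then show ?thesis by (simp only: sin_minus)
qed

lemma cos_mm: "cos (- u - v) = cos (u + v)"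
proof -
  have "- u - v = - (u + v)" by simp
  then show ?thesis by (simp only: cos_minus)
qed

lemma rep2:
  fixes e A B x y :: real and p q :: int
  shows "complex_of_real (e * (A * cos (real_of_int p * x + real_of_int q * y) + B * sin (real_of_int p * x + real_of_int q * y)))
    = complex_of_real e * ((A - \<i> * B)/2) * E (p, q) x y + complex_of_real e * ((A + \<i> * B)/2) * E (-p, -q) x y"
  unfolding E_explicit
  by (simp add: complex_eq_iff algebra_simps add_divide_distrib diff_divide_distrib sin_mm cos_mm)

lemma part2:
  fixes \<kappa> \<alpha> :: real
  shows "(\<forall>(n::int) (m::int) (a::int \<Rightarrow> real) (b::int \<Rightarrow> real) (\<theta>::real \<Rightarrow> real \<Rightarrow> real \<Rightarrow> real).
       \<bar>n\<bar> + \<bar>m\<bar> \<noteq> 0 \<longrightarrow>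
       (\<lambda>k. real_of_int \<bar>k\<bar> * ((a k)^2 + (b k)^2)) summable_on UNIV \<longrightarrow>
       (\<forall>t\<ge>0.
          let S = (\<lambda>(N::nat) x y. \<Sum>k\<in>{- int N..int N}.
                    exp (- \<kappa> * fpow (real_of_int (n^2 * k^2 + m^2 * k^2)) \<alpha> * t) *
                    (a k * cos (k * n * x + k * m * y) + b k * sin (k * n * x + k * m * y)))
          in (\<lambda>(x,y). \<theta> x y t) measurable_on Tbox
             \<and> (\<forall>N. (\<lambda>(x,y). (\<theta> x y t - S N x y)^2) integrable_on Tbox)
             \<and> (\<lambda>N. integral Tbox (\<lambda>(x,y). (\<theta> x y t - S N x y)^2)) \<longlonglongrightarrow> 0) \<longrightarrow>
       sqg_solution \<kappa> \<alpha> \<theta>)"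
proof (intro allI impI)
  fix n m :: int and a b :: "int \<Rightarrow> real" and \<theta> :: "real \<Rightarrow> real \<Rightarrow> real \<Rightarrow> real"
  assume nm: "\<bar>n\<bar> + \<bar>m\<bar> \<noteq> 0"
  define S where "S t = (\<lambda>(N::nat) (x::real) (y::real). \<Sum>k\<in>{- int N..int N}.
                    exp (- \<kappa> * fpow (real_of_int (n^2 * k^2 + m^2 * k^2)) \<alpha> * t) *
                    (a k * cos (k * n * x + k * m * y) + b k * sin (k * n * x + k * m * y)))" for t
  assume L2: "\<forall>t\<ge>0.
          let S = (\<lambda>(N::nat) x y. \<Sum>k\<in>{- int N..int N}.
                    exp (- \<kappa> * fpow (real_of_int (n^2 * k^2 + m^2 * k^2)) \<alpha> * t) *
                    (a k * cos (k * n * x + k * m * y) + b k * sin (k * n * x + k * m * y)))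
          in (\<lambda>(x,y). \<theta> x y t) measurable_on Tbox
             \<and> (\<forall>N. (\<lambda>(x,y). (\<theta> x y t - S N x y)^2) integrable_on Tbox)
             \<and> (\<lambda>N. integral Tbox (\<lambda>(x,y). (\<theta> x y t - S N x y)^2)) \<longlonglongrightarrow> 0"
  then have L2': "(\<lambda>(x,y). \<theta> x y t) measurable_on Tbox
             \<and> (\<forall>N. (\<lambda>(x,y). (\<theta> x y t - S t N x y)^2) integrable_on Tbox)
             \<and> (\<lambda>N. integral Tbox (\<lambda>(x,y). (\<theta> x y t - S t N x y)^2)) \<longlonglongrightarrow> 0" if "t \<ge> 0" for t
    using that unfolding S_def Let_def by blast
  define \<omega> :: "int \<times> bool \<Rightarrow> int \<times> int" where
    "\<omega> i = (if snd i then (fst i * n, fst i * m) else (- (fst i * n), - (fst i * m)))" for i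
  define c :: "int \<times> bool \<Rightarrow> complex" where
    "c i = (if snd i then (a (fst i) - \<i> * b (fst i))/2 else (a (fst i) + \<i> * b (fst i))/2)" for i
  define IN :: "nat \<Rightarrow> (int \<times> bool) set" where "IN N = {- int N..int N} \<times> UNIV" for N
  define M :: "int \<Rightarrow> int \<Rightarrow> nat" where "M p q = nat (\<bar>p\<bar> + \<bar>q\<bar>)" for p q
  define C where "C p q = (\<Sum>i\<in>{i\<in>IN (M p q). \<omega> i = (p,q)}. c i)" for p q
  have finIN: "finite (IN N)" for N unfolding IN_def by simp
  have fs: "frac_symbol \<alpha> (fst (\<omega> i)) (snd (\<omega> i)) = fpow (real_of_int (n^2 * (fst i)^2 + m^2 * (fst i)^2)) \<alpha>" for i
    unfolding frac_symbol_def \<omega>_def by (simp add: power_mult_distrib algebra_simps)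
  have rep: "complex_of_real (S t N x y) = (\<Sum>i\<in>IN N. complex_of_real (exp (- \<kappa> * frac_symbol \<alpha> (fst (\<omega> i)) (snd (\<omega> i)) * t)) * c i * E (\<omega> i) x y)" for t N x y
  proof -
    have "(\<Sum>i\<in>IN N. complex_of_real (exp (- \<kappa> * frac_symbol \<alpha> (fst (\<omega> i)) (snd (\<omega> i)) * t)) * c i * E (\<omega> i) x y)
      = (\<Sum>k\<in>{- int N..int N}. \<Sum>bb\<in>UNIV. complex_of_real (exp (- \<kappa> * frac_symbol \<alpha> (fst (\<omega> (k,bb))) (snd (\<omega> (k,bb))) * t)) * c (k,bb) * E (\<omega> (k,bb)) x y)"
      unfolding IN_def by (simp add: sum.cartesian_product)
    also have "\<dots> = (\<Sum>k\<in>{- int N..int N}. complex_of_real (exp (- \<kappa> * fpow (real_of_int (n^2 * k^2 + m^2 * k^2)) \<alpha> * t) *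
                    (a k * cos (k * n * x + k * m * y) + b k * sin (k * n * x + k * m * y))))"
    proof (intro sum.cong refl)
      fix k assume "k \<in> {- int N..int N}"
      have fs': "frac_symbol \<alpha> (fst (\<omega> (k,bb))) (snd (\<omega> (k,bb))) = fpow (real_of_int (n^2 * k^2 + m^2 * k^2)) \<alpha>" for bb
        using fs[of "(k,bb)"] by simp
      show "(\<Sum>bb\<in>UNIV. complex_of_real (exp (- \<kappa> * frac_symbol \<alpha> (fst (\<omega> (k,bb))) (snd (\<omega> (k,bb))) * t)) * c (k,bb) * E (\<omega> (k,bb)) x y)
         = complex_of_real (exp (- \<kappa> * fpow (real_of_int (n^2 * k^2 + m^2 * k^2)) \<alpha> * t) *
                    (a k * cos (k * n * x + k * m * y) + b k * sin (k * n * x + k * m * y)))"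
        unfolding fs' rep2 by (simp add: UNIV_bool \<omega>_def c_def)
    qed
    finally show ?thesis unfolding S_def by simp
  qed
  have fcS: "fcoef (S t N) p q = complex_of_real (exp (- \<kappa> * frac_symbol \<alpha> p q * t)) * (\<Sum>i\<in>{i\<in>IN N. \<omega> i = (p,q)}. c i)" for t N p q
  proof -
    have "fcoef (S t N) p q = (\<Sum>i\<in>{i\<in>IN N. \<omega> i = (p,q)}. complex_of_real (exp (- \<kappa> * frac_symbol \<alpha> (fst (\<omega> i)) (snd (\<omega> i)) * t)) * c i)"
      by (rule fcoef_trig[OF finIN]) (simp add: rep)
    also have "\<dots> = (\<Sum>i\<in>{i\<in>IN N. \<omega> i = (p,q)}. complex_of_real (exp (- \<kappa> * frac_symbol \<alpha> p q * t)) * c i)"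
      by (rule sum.cong) auto
    finally show ?thesis by (simp add: sum_distrib_left)
  qed
  have nm1: "\<bar>n\<bar> + \<bar>m\<bar> \<ge> 1" using nm by simp
  have bnd: "\<bar>fst i\<bar> \<le> \<bar>p\<bar> + \<bar>q\<bar>" if "\<omega> i = (p,q)" for i p q
  proof -
    have "\<bar>p\<bar> + \<bar>q\<bar> = \<bar>fst i\<bar> * (\<bar>n\<bar> + \<bar>m\<bar>)"
      using that by (auto simp: \<omega>_def abs_mult algebra_simps split: if_splits)
    also have "\<dots> \<ge> \<bar>fst i\<bar> * 1" using nm1 by (intro mult_left_mono) auto
    finally show ?thesis by simp
  qed
  have stab: "{i\<in>IN N. \<omega> i = (p,q)} = {i\<in>IN (M p q). \<omega> i = (p,q)}" if "M p q \<le> N" for N p q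
  proof -
    have "int (M p q) = \<bar>p\<bar> + \<bar>q\<bar>" unfolding M_def by simp
    then show ?thesis using that bnd[of _ p q] unfolding IN_def by fastforce
  qed
  have coef: "fcoef (\<lambda>x y. \<theta> x y t) p q = complex_of_real (exp (- \<kappa> * frac_symbol \<alpha> p q * t)) * C p q"
    and sq: "(\<lambda>(x,y). \<theta> x y t) measurable_on Tbox \<and> (\<lambda>(x,y). (\<theta> x y t)^2) integrable_on Tbox"
    if t: "t \<ge> 0" for t :: real and p q :: int
  proof -
    define h where "h = (\<lambda>z::real\<times>real. \<theta> (fst z) (snd z) t)"
    define s where "s N = (\<lambda>z::real\<times>real. S t N (fst z) (snd z))" for N
    have hm: "h measurable_on Tbox" and di: "\<And>N. (\<lambda>z. (h z - s N z)^2) integrable_on Tbox"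
      and lim: "(\<lambda>N. integral Tbox (\<lambda>z. (h z - s N z)^2)) \<longlonglongrightarrow> 0"
      using L2'[OF t] unfolding h_def s_def case_prod_beta' by auto
    have sc: "continuous_on Tbox (s N)" for N
      unfolding s_def S_def by (intro continuous_intros)
    have ev: "eventually (\<lambda>N. fcoef (\<lambda>x y. s N (x,y)) p q = complex_of_real (exp (- \<kappa> * frac_symbol \<alpha> p q * t)) * C p q) sequentially"
      unfolding eventually_sequentially
    proof (intro exI allI impI)
      fix N assume "M p q \<le> N"
      then show "fcoef (\<lambda>x y. s N (x,y)) p q = complex_of_real (exp (- \<kappa> * frac_symbol \<alpha> p q * t)) * C p q"
        unfolding s_def C_def using fcS[of t N p q] stab[of p q N] by simp
    qed
    have "fcoef (\<lambda>x y. h (x,y)) p q = complex_of_real (exp (- \<kappa> * frac_symbol \<alpha> p q * t)) * C p q"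
      by (rule L2_fcoef[OF hm sc di lim ev])
    then show "fcoef (\<lambda>x y. \<theta> x y t) p q = complex_of_real (exp (- \<kappa> * frac_symbol \<alpha> p q * t)) * C p q"
      unfolding h_def by simp
    have "(\<lambda>z. (h z)^2) integrable_on Tbox" by (rule L2_sq_integrable[OF hm sc di])
    then show "(\<lambda>(x,y). \<theta> x y t) measurable_on Tbox \<and> (\<lambda>(x,y). (\<theta> x y t)^2) integrable_on Tbox"
      using hm unfolding h_def case_prod_beta' by simp
  qed
  show "sqg_solution \<kappa> \<alpha> \<theta>"
  proof (rule sol_from_coefs[where C = C])
    show "\<And>t. 0 \<le> t \<Longrightarrow> (\<lambda>(x,y). \<theta> x y t) measurable_on Tbox \<and> (\<lambda>(x,y). (\<theta> x y t)^2) integrable_on Tbox"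
      by (rule sq)
    show "\<And>t p q. 0 \<le> t \<Longrightarrow> fcoef (\<lambda>x y. \<theta> x y t) p q = complex_of_real (exp (- \<kappa> * frac_symbol \<alpha> p q * t)) * C p q"
      by (rule coef)
    fix t :: real and p q :: int assume t: "0 \<le> t"
    have line: "\<exists>k. j = (k * n, k * m)" if "fcoef (\<lambda>x y. \<theta> x y t) (fst j) (snd j) \<noteq> 0" for j
    proof -
      from that have "C (fst j) (snd j) \<noteq> 0" unfolding coef[OF t] by auto
      then have "\<not> (\<forall>i\<in>{i\<in>IN (M (fst j) (snd j)). \<omega> i = (fst j, snd j)}. c i = 0)"
        unfolding C_def by (meson sum.neutral)
      then obtain i where "\<omega> i = (fst j, snd j)" by blast
      then show ?thesis unfolding \<omega>_def
        by (cases "snd i") (auto intro: exI[of _ "fst i"] exI[of _ "- fst i"] simp: prod_eq_iff)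
    qed
    show "transport_term (\<lambda>x y. \<theta> x y t) p q summable_on UNIV \<and> transport_coef (\<lambda>x y. \<theta> x y t) p q = 0"
    proof (rule transport_collinear)
      fix j l
      assume "fcoef (\<lambda>x y. \<theta> x y t) (fst j) (snd j) \<noteq> 0" "fcoef (\<lambda>x y. \<theta> x y t) (fst l) (snd l) \<noteq> 0"
      then obtain k1 k2 where "j = (k1 * n, k1 * m)" "l = (k2 * n, k2 * m)" using line by blast
      then show "snd j * fst l = fst j * snd l" by simp
    qed
  qed
qed


theorem theorem1:
  fixes \<kappa> \<alpha> :: real
  assumes "0 \<le> \<alpha>" and "\<alpha> < 1" and "\<kappa> > 0"
  shows
   "(\<forall>(c1::real) c2 c3 c4 c5 c6 c7 c8 (n::int) (m::int) (k::int).
       n * m \<noteq> 0 \<longrightarrow>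
       ((\<bar>c1\<bar> + \<bar>c2\<bar> + \<bar>c3\<bar> + \<bar>c4\<bar>) * (\<bar>c5\<bar> + \<bar>c6\<bar> + \<bar>c7\<bar> + \<bar>c8\<bar>) \<noteq> 0
          \<longrightarrow> n^2 + m^2 = k^2) \<longrightarrow>
       sqg_solution \<kappa> \<alpha> (\<lambda>x y t.
          exp (- \<kappa> * fpow (real_of_int (n^2 + m^2)) \<alpha> * t) *
            (c1 * sin (n * x) * sin (m * y) + c2 * cos (n * x) * sin (m * y)
             + c3 * sin (n * x) * cos (m * y) + c4 * cos (n * x) * cos (m * y))
        + exp (- \<kappa> * fpow (real_of_int \<bar>k\<bar>) (2 * \<alpha>) * t) *
            (c5 * sin (k * x) + c6 * sin (k * y) + c7 * cos (k * x) + c8 * cos (k * y))))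
    \<and>
    (\<forall>(n::int) (m::int) (a::int \<Rightarrow> real) (b::int \<Rightarrow> real) (\<theta>::real \<Rightarrow> real \<Rightarrow> real \<Rightarrow> real).
       \<bar>n\<bar> + \<bar>m\<bar> \<noteq> 0 \<longrightarrow>
       (\<lambda>k. real_of_int \<bar>k\<bar> * ((a k)^2 + (b k)^2)) summable_on UNIV \<longrightarrow>
       (\<forall>t\<ge>0.
          let S = (\<lambda>(N::nat) x y. \<Sum>k\<in>{- int N..int N}.
                    exp (- \<kappa> * fpow (real_of_int (n^2 * k^2 + m^2 * k^2)) \<alpha> * t) *
                    (a k * cos (k * n * x + k * m * y) + b k * sin (k * n * x + k * m * y)))
          in (\<lambda>(x,y). \<theta> x y t) measurable_on Tbox
             \<and> (\<forall>N. (\<lambda>(x,y). (\<theta> x y t - S N x y)^2) integrable_on Tbox)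
             \<and> (\<lambda>N. integral Tbox (\<lambda>(x,y). (\<theta> x y t - S N x y)^2)) \<longlonglongrightarrow> 0) \<longrightarrow>
       sqg_solution \<kappa> \<alpha> \<theta>)"
  using part1[OF assms(1), of \<kappa>] part2[of \<kappa> \<alpha>] by (rule conjI)

end
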